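(* Let $q$ be even and let $H$ be the point-line incidence matrix of the Desarguesian projective plane $\mathrm{PG}(2,q)$, regarded as a binary matrix, and let $C=\ker(H)=\{c\in\mathbb{F}_2^{q^2+q+1} : cH^\top=0\}$ with minimum distance $d$. Then one round of the bit-flipping decoding algorithm with respect to $H$ corrects every error of Hamming weight at most $\lfloor\frac{d-1}{2}\rfloor$; that is, for every $c\in C$ and every $e\in\mathbb{F}_2^{q^2+q+1}$ with $\mathrm{wt}(e)\le\lfloor\frac{d-1}{2}\rfloor$, one round of bit-flipping applied to $y=c+e$ outputs $c$.
   Context: $\mathrm{PG}(2,q)$ is the projective plane whose points and lines are the 1- and 2-dimensional subspaces of $\mathbb{F}_q^3$; it has $q^2+q+1$ points and $q^2+q+1$ lines, each line contains $q+1$ points and each point lies on $q+1$ lines. Its incidence matrix has rows indexed by points and columns by lines, with entry $1$ iff the point lies on the line. For a binary matrix $H$ with $m$ rows, $n$ columns and constant column weight $v$, one round of the bit-flipping algorithm on input $y\in\mathbb{F}_2^n$ is: compute the syndrome $s=Hy^\top\in\mathbb{F}_2^m$; for each column $j$ let $u_j$ be the number of rows $i$ with $H_{ij}=1$ and $s_i=1$ (unsatisfied parity checks involving $j$); output $y$ with the bits in positions $\{j : u_j> v/2\}$ flipped. The Hamming weight $\mathrm{wt}(e)$ is the number of nonzero coordinates of $e$. *)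

theory Defs
  imports Main
begin

text \<open>Vectors of F_q^3 are triples; F_2 is represented by bool (True = 1, addition = xor).\<close>

type_synonym 'a vec3 = "'a \<times> 'a \<times> 'a"

definition vscale :: "'a::field \<Rightarrow> 'a vec3 \<Rightarrow> 'a vec3" where
  "vscale c v = (case v of (x, y, z) \<Rightarrow> (c * x, c * y, c * z))"

definition vadd :: "'a::field vec3 \<Rightarrow> 'a vec3 \<Rightarrow> 'a vec3" where
  "vadd u v = (case u of (x, y, z) \<Rightarrow> case v of (x', y', z') \<Rightarrow> (x + x', y + y', z + z'))"

definition lin_indep2 :: "'a::field vec3 \<Rightarrow> 'a vec3 \<Rightarrow> bool" where
  "lin_indep2 u w \<longleftrightarrow> (\<forall>s t. vadd (vscale s u) (vscale t w) = (0, 0, 0) \<longrightarrow> s = 0 \<and> t = 0)"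

definition pg_points :: "'a::field vec3 set set" where
  "pg_points = {{vscale s v | s. True} | v. v \<noteq> (0, 0, 0)}"

definition pg_lines :: "'a::field vec3 set set" where
  "pg_lines = {{vadd (vscale s u) (vscale t w) | s t. True} | u w. lin_indep2 u w}"

text \<open>Generic binary parity-check matrix given by rows R, columns J and incidence inc
  (H_{ij} = 1 iff inc i j). Binary words are functions J \<Rightarrow> bool.\<close>

definition syndrome :: "'r set \<Rightarrow> 'c set \<Rightarrow> ('r \<Rightarrow> 'c \<Rightarrow> bool) \<Rightarrow> ('c \<Rightarrow> bool) \<Rightarrow> 'r \<Rightarrow> bool" where
  "syndrome R J inc y i \<longleftrightarrow> odd (card {j \<in> J. inc i j \<and> y j})"

definition unsat_count :: "'r set \<Rightarrow> 'c set \<Rightarrow> ('r \<Rightarrow> 'c \<Rightarrow> bool) \<Rightarrow> ('c \<Rightarrow> bool) \<Rightarrow> 'c \<Rightarrow> nat" where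
  "unsat_count R J inc y j = card {i \<in> R. inc i j \<and> syndrome R J inc y i}"

definition col_weight :: "'r set \<Rightarrow> ('r \<Rightarrow> 'c \<Rightarrow> bool) \<Rightarrow> 'c \<Rightarrow> nat" where
  "col_weight R inc j = card {i \<in> R. inc i j}"

definition bitflip_round :: "'r set \<Rightarrow> 'c set \<Rightarrow> ('r \<Rightarrow> 'c \<Rightarrow> bool) \<Rightarrow> ('c \<Rightarrow> bool) \<Rightarrow> ('c \<Rightarrow> bool)" where
  "bitflip_round R J inc y = (\<lambda>j. if j \<in> J \<and> 2 * unsat_count R J inc y j > col_weight R inc j
                                    then \<not> y j else y j)"

definition words :: "'c set \<Rightarrow> ('c \<Rightarrow> bool) set" where
  "words J = {y. \<forall>j. j \<notin> J \<longrightarrow> \<not> y j}"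

definition wt :: "('c \<Rightarrow> bool) \<Rightarrow> nat" where
  "wt y = card {j. y j}"

definition bin_kernel :: "'r set \<Rightarrow> 'c set \<Rightarrow> ('r \<Rightarrow> 'c \<Rightarrow> bool) \<Rightarrow> ('c \<Rightarrow> bool) set" where
  "bin_kernel R J inc = {c \<in> words J. \<forall>i \<in> R. \<not> syndrome R J inc c i}"

definition min_dist :: "('c \<Rightarrow> bool) set \<Rightarrow> nat" where
  "min_dist C = Inf {wt c | c. c \<in> C \<and> c \<noteq> (\<lambda>_. False)}"

definition xorw :: "('c \<Rightarrow> bool) \<Rightarrow> ('c \<Rightarrow> bool) \<Rightarrow> ('c \<Rightarrow> bool)" where
  "xorw c e = (\<lambda>j. c j \<noteq> e j)"

text \<open>Incidence matrix of PG(2,q): rows = points, columns = lines, P on L iff P \<subseteq> L.\<close>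
abbreviation pg_inc :: "'a vec3 set \<Rightarrow> 'a vec3 set \<Rightarrow> bool" where
  "pg_inc P L \<equiv> P \<subseteq> L"

end

theory Submission imports Defs begin

definition sp1 :: "'a::field vec3 \<Rightarrow> 'a vec3 set" where
  "sp1 v = {vscale s v | s. True}"
definition sp2 :: "'a::field vec3 \<Rightarrow> 'a vec3 \<Rightarrow> 'a vec3 set" where
  "sp2 u w = {vadd (vscale s u) (vscale t w) | s t. True}"

lemma vs[simp]: "vscale c (x,y,z) = (c*x,c*y,c*z)" by (simp add: vscale_def)
lemma va[simp]: "vadd (a,b,c) (x,y,z) = (a+x,b+y,c+z)" by (simp add: vadd_def)

lemma pts_def: "pg_points = {sp1 v | v. v \<noteq> (0,0,0)}" unfolding pg_points_def sp1_def by simp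
lemma lines_def: "pg_lines = {sp2 u w | u w. lin_indep2 u w}" unfolding pg_lines_def sp2_def by simp

lemma li3: "lin_indep2 (a,b,c) (x,y,z) \<longleftrightarrow> (\<forall>s t. s*a+t*x=0 \<and> s*b+t*y=0 \<and> s*c+t*z=0 \<longrightarrow> s=0 \<and> t=0)"
  unfolding lin_indep2_def by auto

lemma li_nz: assumes "lin_indep2 u w" shows "u \<noteq> (0,0,0)" "w \<noteq> (0,0,0)"
proof
  assume "u = (0,0,0)"
  then have "vadd (vscale 1 u) (vscale 0 w) = (0,0,0)" by (cases w) simp
  then have "(1::'a) = 0" using assms unfolding lin_indep2_def by blast
  then show False by simp
next
  show "w \<noteq> (0,0,0)"
  proof
  assume "w = (0,0,0)"
  then have "vadd (vscale 0 u) (vscale 1 w) = (0,0,0)" by (cases u) simp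
  then have "(1::'a) = 0" using assms unfolding lin_indep2_def by blast
  then show False by simp
  qed
qed

lemma sp2_scale: "v \<in> sp2 u w \<Longrightarrow> vscale s v \<in> sp2 u w"
proof -
  assume "v \<in> sp2 u w"
  then obtain a b where v: "v = vadd (vscale a u) (vscale b w)" unfolding sp2_def by auto
  have "vscale s v = vadd (vscale (s*a) u) (vscale (s*b) w)"
    unfolding v by (cases u; cases w) (simp add: algebra_simps)
  then show ?thesis unfolding sp2_def by blast
qed

lemma pt_sub: "sp1 v \<subseteq> sp2 u w \<longleftrightarrow> v \<in> sp2 u w"
proof
  assume "sp1 v \<subseteq> sp2 u w"
  moreover have "v \<in> sp1 v" unfolding sp1_def by (rule CollectI, rule exI[of _ 1]) (cases v, simp)
  ultimately show "v \<in> sp2 u w" by blast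
next
  assume "v \<in> sp2 u w" then show "sp1 v \<subseteq> sp2 u w" unfolding sp1_def using sp2_scale by blast
qed

lemma sp2_mem3: "(x,y,z) \<in> sp2 (u1,u2,u3) (w1,w2,w3) \<longleftrightarrow>
   (\<exists>s t. x = s*u1+t*w1 \<and> y = s*u2+t*w2 \<and> z = s*u3+t*w3)"
  unfolding sp2_def by auto

lemma sp1_mem3: "(x,y,z) \<in> sp1 (u1,u2,u3) \<longleftrightarrow> (\<exists>s. x = s*u1 \<and> y = s*u2 \<and> z = s*u3)"
  unfolding sp1_def by auto

lemma scal_id:
  fixes a b c d s t uk wk :: "'a::field"
  assumes "a*d - b*c \<noteq> 0"
  shows "s*uk + t*wk = ((s*d - t*c)/(a*d-b*c)) * (a*uk+b*wk) + ((t*a - s*b)/(a*d-b*c)) * (c*uk+d*wk)"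
proof -
  have e: "(s*d - t*c)*(a*uk+b*wk) + (t*a - s*b)*(c*uk+d*wk) = (s*uk+t*wk)*(a*d-b*c)"
    by (simp add: algebra_simps)
  have "((s*d - t*c)/(a*d-b*c)) * (a*uk+b*wk) + ((t*a - s*b)/(a*d-b*c)) * (c*uk+d*wk)
     = ((s*d - t*c)*(a*uk+b*wk) + (t*a - s*b)*(c*uk+d*wk)) / (a*d-b*c)"
    by (simp add: add_divide_distrib)
  also have "\<dots> = s*uk + t*wk" unfolding e using assms by simp
  finally show ?thesis by simp
qed

lemma sp2_eq:
  assumes "lin_indep2 u w" "v1 \<in> sp2 u w" "v2 \<in> sp2 u w" "lin_indep2 v1 v2"
  shows "sp2 u w = sp2 v1 v2"
proof -
  obtain u1 u2 u3 where u: "u = (u1,u2,u3)" by (cases u) auto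
  obtain w1 w2 w3 where w: "w = (w1,w2,w3)" by (cases w) auto
  obtain a b where v1: "v1 = (a*u1+b*w1, a*u2+b*w2, a*u3+b*w3)"
    using assms(2) unfolding sp2_def u w by auto
  obtain c d where v2: "v2 = (c*u1+d*w1, c*u2+d*w2, c*u3+d*w3)"
    using assms(3) unfolding sp2_def u w by auto
  have iu: "\<And>s t. s*u1+t*w1=0 \<Longrightarrow> s*u2+t*w2=0 \<Longrightarrow> s*u3+t*w3=0 \<Longrightarrow> s=0 \<and> t=0"
    using assms(1) unfolding u w li3 by blast
  have iv: "\<And>s t. s*(a*u1+b*w1)+t*(c*u1+d*w1)=0 \<Longrightarrow> s*(a*u2+b*w2)+t*(c*u2+d*w2)=0
     \<Longrightarrow> s*(a*u3+b*w3)+t*(c*u3+d*w3)=0 \<Longrightarrow> s=0 \<and> t=0"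
    using assms(4) unfolding v1 v2 li3 by blast
  have D: "a*d - b*c \<noteq> 0"
  proof
    assume D0: "a*d - b*c = 0"
    have h1: "\<And>x y. d*(a*x+b*y) + (-b)*(c*x+d*y) = 0"
    proof -
      fix x y
      have "d*(a*x+b*y) + (-b)*(c*x+d*y) = (a*d-b*c)*x" by (simp add: algebra_simps)
      then show "d*(a*x+b*y) + (-b)*(c*x+d*y) = 0" using D0 by simp
    qed
    have h2: "\<And>x y. (-c)*(a*x+b*y) + a*(c*x+d*y) = 0"
    proof -
      fix x y
      have "(-c)*(a*x+b*y) + a*(c*x+d*y) = (a*d-b*c)*y" by (simp add: algebra_simps)
      then show "(-c)*(a*x+b*y) + a*(c*x+d*y) = 0" using D0 by simp
    qed
    have "d = 0 \<and> -b = 0" using iv[of d "-b"] h1 by blast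
    moreover have "-c = 0 \<and> a = 0" using iv[of "-c" a] h2 by blast
    ultimately have "a = 0" "b = 0" "c = 0" "d = 0" by auto
    then show False using iv[of 1 0] by simp
  qed
  show ?thesis
  proof
    show "sp2 u w \<subseteq> sp2 v1 v2"
    proof
      fix x assume "x \<in> sp2 u w"
      then obtain s t where x: "x = (s*u1+t*w1, s*u2+t*w2, s*u3+t*w3)" unfolding sp2_def u w by auto
      show "x \<in> sp2 v1 v2" unfolding x v1 v2 sp2_mem3
        using scal_id[OF D] by blast
    qed
  next
    show "sp2 v1 v2 \<subseteq> sp2 u w"
    proof
      fix x assume "x \<in> sp2 v1 v2"
      then obtain s t where x: "x = vadd (vscale s v1) (vscale t v2)" unfolding sp2_def by auto
      show "x \<in> sp2 u w" unfolding x v1 v2 u w vs va sp2_mem3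
        by (rule exI[of _ "s*a+t*c"], rule exI[of _ "s*b+t*d"]) (simp add: algebra_simps)
    qed
  qed
qed


lemma vscale_comp: "vscale a (vscale b v) = vscale (a*b) v"
  by (cases v) (simp add: algebra_simps)
lemma vscale_1: "vscale 1 v = v" by (cases v) simp
lemma vscale_zero_iff: "vscale t v = (0,0,0) \<longleftrightarrow> t = 0 \<or> v = (0,0,0)"
  by (cases v) auto

lemma mem_sp1: "v \<in> sp1 v" unfolding sp1_def using vscale_1 by (metis (mono_tags, lifting) CollectI)

lemma sp1_scale: assumes "c \<noteq> 0" shows "sp1 (vscale c v) = sp1 v"
proof
  show "sp1 (vscale c v) \<subseteq> sp1 v" unfolding sp1_def using vscale_comp by blast
  show "sp1 v \<subseteq> sp1 (vscale c v)"
  proof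
    fix x assume "x \<in> sp1 v"
    then obtain r where x: "x = vscale r v" unfolding sp1_def by auto
    have "x = vscale (r/c) (vscale c v)" unfolding x vscale_comp using assms by simp
    then show "x \<in> sp1 (vscale c v)" unfolding sp1_def by blast
  qed
qed

lemma sc: fixes s t a b :: "'a::field" assumes "s \<noteq> 0" "s*a + t*b = 0" shows "a = (-t/s)*b"
proof -
  have "s*a = -(t*b)" using assms(2) by (simp add: eq_neg_iff_add_eq_0)
  then have "a = -(t*b)/s" using assms(1) by (simp add: field_simps)
  then show ?thesis by simp
qed

lemma indep_of_pts:
  assumes "sp1 v1 \<noteq> sp1 v2" "v1 \<noteq> (0,0,0)" "v2 \<noteq> (0,0,0)"
  shows "lin_indep2 v1 v2"
  unfolding lin_indep2_def
proof (intro allI impI)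
  fix s t assume eq: "vadd (vscale s v1) (vscale t v2) = (0, 0, 0)"
  obtain a1 a2 a3 where v1: "v1 = (a1,a2,a3)" by (cases v1) auto
  obtain b1 b2 b3 where v2: "v2 = (b1,b2,b3)" by (cases v2) auto
  have e: "s*a1 + t*b1 = 0" "s*a2 + t*b2 = 0" "s*a3 + t*b3 = 0" using eq unfolding v1 v2 by auto
  show "s = 0 \<and> t = 0"
  proof (rule ccontr)
    assume nz: "\<not> (s = 0 \<and> t = 0)"
    show False
    proof (cases "s = 0")
      case True
      then have "t \<noteq> 0" using nz by simp
      then have "b1 = 0" "b2 = 0" "b3 = 0" using e True by auto
      then show False using assms(3) v2 by simp
    next
      case False
      have "v1 = vscale (-t/s) v2" unfolding v1 v2 using sc[OF False e(1)] sc[OF False e(2)] sc[OF False e(3)]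
        by simp
      moreover have "t \<noteq> 0"
      proof
        assume "t = 0"
        then have "a1 = 0" "a2 = 0" "a3 = 0" using e False by auto
        then show False using assms(2) v1 by simp
      qed
      ultimately have "sp1 v1 = sp1 v2" using sp1_scale[of "-(t/s)" v2] False by simp
      then show False using assms(1) by simp
    qed
  qed
qed

lemma two_pts:
  assumes "L1 \<in> pg_lines" "L2 \<in> pg_lines" "P \<in> pg_points" "Q \<in> pg_points" "P \<noteq> Q"
    "P \<subseteq> L1" "Q \<subseteq> L1" "P \<subseteq> L2" "Q \<subseteq> L2"
  shows "L1 = L2"
proof -
  obtain u w where L1: "L1 = sp2 u w" "lin_indep2 u w" using assms(1) unfolding lines_def by auto
  obtain u' w' where L2: "L2 = sp2 u' w'" "lin_indep2 u' w'" using assms(2) unfolding lines_def by auto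
  obtain v1 where P: "P = sp1 v1" "v1 \<noteq> (0,0,0)" using assms(3) unfolding pts_def by auto
  obtain v2 where Q: "Q = sp1 v2" "v2 \<noteq> (0,0,0)" using assms(4) unfolding pts_def by auto
  have i: "lin_indep2 v1 v2" using indep_of_pts P Q assms(5) by simp
  have a1: "v1 \<in> sp2 u w" using assms(6) unfolding P(1) L1(1) pt_sub .
  have a2: "v2 \<in> sp2 u w" using assms(7) unfolding Q(1) L1(1) pt_sub .
  have a3: "v1 \<in> sp2 u' w'" using assms(8) unfolding P(1) L2(1) pt_sub .
  have a4: "v2 \<in> sp2 u' w'" using assms(9) unfolding Q(1) L2(1) pt_sub .
  have "L1 = sp2 v1 v2" using sp2_eq[OF L1(2) a1 a2 i] L1 by simp
  moreover have "L2 = sp2 v1 v2" using sp2_eq[OF L2(2) a3 a4 i] L2 by simp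
  ultimately show ?thesis by simp
qed

lemma fin3: assumes f: "finite (UNIV :: 'a set)" shows "finite (UNIV :: 'a vec3 set)"
proof -
  have "finite (UNIV :: ('a \<times> 'a) set)" using finite_Prod_UNIV[OF f f] .
  then show ?thesis using finite_Prod_UNIV[OF f] by blast
qed

lemma fin_pts: "finite (UNIV :: 'a::field set) \<Longrightarrow> finite (pg_points :: 'a vec3 set set)"
proof -
  assume f: "finite (UNIV :: 'a set)"
  have "finite (Pow (UNIV::'a vec3 set))" using fin3[OF f] by (simp only: finite_Pow_iff)
  then show ?thesis by (rule finite_subset[rotated]) auto
qed

lemma fin_lines: "finite (UNIV :: 'a::field set) \<Longrightarrow> finite (pg_lines :: 'a vec3 set set)"
proof -
  assume f: "finite (UNIV :: 'a set)"
  have "finite (Pow (UNIV::'a vec3 set))" using fin3[OF f] by (simp only: finite_Pow_iff)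
  then show ?thesis by (rule finite_subset[rotated]) auto
qed

lemma line_pts:
  assumes fin: "finite (UNIV :: 'a::field set)" and L: "(L :: 'a vec3 set) \<in> pg_lines"
  shows "card (UNIV :: 'a set) + 1 \<le> card {P \<in> pg_points. P \<subseteq> L}"
proof -
  obtain u w where L: "L = sp2 u w" "lin_indep2 u w" using L unfolding lines_def by auto
  define f where "f = (\<lambda>x. case x of None \<Rightarrow> sp1 u | Some s \<Rightarrow> sp1 (vadd (vscale s u) w))"
  have uw: "\<And>s t. vadd (vscale s u) (vscale t w) = (0,0,0) \<Longrightarrow> s = 0 \<and> t = 0"
    using L(2) unfolding lin_indep2_def by blast
  have nz: "vadd (vscale s u) w \<noteq> (0,0,0)" for s
  proof
    assume "vadd (vscale s u) w = (0,0,0)"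
    then have "vadd (vscale s u) (vscale 1 w) = (0,0,0)" by (simp add: vscale_1)
    then show False using uw[of s 1] by simp
  qed
  have sub: "range f \<subseteq> {P \<in> pg_points. P \<subseteq> L}"
  proof
    fix P assume "P \<in> range f"
    then obtain x where x: "P = f x" by auto
    show "P \<in> {P \<in> pg_points. P \<subseteq> L}"
    proof (cases x)
      case None
      have "u \<in> sp2 u w" unfolding sp2_def
        by (rule CollectI, rule exI[of _ 1], rule exI[of _ 0]) (cases u; cases w; simp)
      then have "sp1 u \<subseteq> L" unfolding L(1) pt_sub .
      moreover have "sp1 u \<in> pg_points" unfolding pts_def using li_nz(1)[OF L(2)] by blast
      moreover have "P = sp1 u" using None x f_def by simp
      ultimately show ?thesis by simp
    next
      case (Some s)
      have "vadd (vscale s u) w \<in> sp2 u w" unfolding sp2_def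
        by (rule CollectI, rule exI[of _ s], rule exI[of _ 1]) (simp add: vscale_1)
      then have "sp1 (vadd (vscale s u) w) \<subseteq> L" unfolding L(1) pt_sub .
      moreover have "sp1 (vadd (vscale s u) w) \<in> pg_points" unfolding pts_def using nz by blast
      moreover have "P = sp1 (vadd (vscale s u) w)" using Some x f_def by simp
      ultimately show ?thesis by simp
    qed
  qed
  have inj: "inj f"
  proof
    fix x y assume fxy: "f x = f y"
    have ex: "\<exists>c. a = vscale c b" if "sp1 a = sp1 b" for a b :: "'a vec3"
    proof -
      have "a \<in> sp1 b" using that mem_sp1 by metis
      then show ?thesis unfolding sp1_def by auto
    qed
    obtain u1 u2 u3 where u: "u = (u1,u2,u3)" by (cases u) auto
    obtain w1 w2 w3 where w: "w = (w1,w2,w3)" by (cases w) auto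
    have uw3: "s = 0 \<and> t = 0" if "s*u1+t*w1 = 0" "s*u2+t*w2 = 0" "s*u3+t*w3 = 0" for s t
    proof (rule uw)
      show "vadd (vscale s u) (vscale t w) = (0,0,0)" unfolding u w using that by simp
    qed
    show "x = y"
    proof (cases x; cases y)
      assume "x = None" "y = None" then show ?thesis by simp
    next
      fix s assume xy: "x = None" "y = Some s"
      then have "sp1 u = sp1 (vadd (vscale s u) w)" using fxy f_def by simp
      then obtain c where "u = vscale c (vadd (vscale s u) w)" using ex by blast
      then have e: "u1 = c*(s*u1+w1)" "u2 = c*(s*u2+w2)" "u3 = c*(s*u3+w3)" unfolding u w by auto
      have "(1 - c*s) = 0 \<and> -c = 0"
        by (rule uw3) (use e in \<open>simp_all add: algebra_simps\<close>)
      then have False by (metis mult_zero_left zero_neq_one right_minus_eq neg_equal_0_iff_equal)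
      then show ?thesis ..
    next
      fix s assume xy: "x = Some s" "y = None"
      then have "sp1 (vadd (vscale s u) w) = sp1 u" using fxy f_def by simp
      then obtain c where "vadd (vscale s u) w = vscale c u" using ex by blast
      then have e: "s*u1+w1 = c*u1" "s*u2+w2 = c*u2" "s*u3+w3 = c*u3" unfolding u w by auto
      have "(s - c) = 0 \<and> 1 = (0::'a)"
        by (rule uw3) (use e in \<open>simp_all add: algebra_simps\<close>)
      then show ?thesis by simp
    next
      fix s s' assume xy: "x = Some s" "y = Some s'"
      then have "sp1 (vadd (vscale s u) w) = sp1 (vadd (vscale s' u) w)" using fxy f_def by simp
      then obtain c where "vadd (vscale s u) w = vscale c (vadd (vscale s' u) w)" using ex by blast
      then have e: "s*u1+w1 = c*(s'*u1+w1)" "s*u2+w2 = c*(s'*u2+w2)" "s*u3+w3 = c*(s'*u3+w3)"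
        unfolding u w by auto
      have "(s - c*s') = 0 \<and> 1 - c = 0"
        by (rule uw3) (use e in \<open>simp_all add: algebra_simps\<close>)
      then show ?thesis using xy by simp
    qed
  qed
  have "card (range f) = card (UNIV :: 'a option set)" using inj by (simp add: card_image)
  also have "card (UNIV :: 'a option set) = card (UNIV :: 'a set) + 1"
  proof -
    have "(UNIV :: 'a option set) = insert None (Some ` UNIV)" by (metis UNIV_option_conv)
    moreover have "card (insert None (Some ` (UNIV::'a set))) = card (UNIV :: 'a set) + 1"
      using fin by (simp add: card_image)
    ultimately show ?thesis by simp
  qed
  finally have "card (range f) = card (UNIV :: 'a set) + 1" .
  moreover have "card (range f) \<le> card {P \<in> pg_points. P \<subseteq> L}"
    using sub fin_pts[OF fin] by (intro card_mono) auto
  ultimately show ?thesis by simp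
qed


lemma sq_inj: fixes s t :: "'a::field" assumes c2: "(1::'a) + 1 = 0" and e: "s*s = t*t" shows "s = t"
proof -
  have "(s+t)*(s+t) = s*s + t*t + (1+1)*(s*t)" by (simp add: algebra_simps)
  also have "\<dots> = t*t + t*t" using c2 e by simp
  also have "\<dots> = (1+1)*(t*t)" by (simp add: algebra_simps)
  finally have "(s+t)*(s+t) = 0" using c2 by simp
  then have "s + t = 0" by simp
  moreover have "t + t = 0" using c2 by (metis distrib_left mult_1_right mult_zero_right)
  ultimately show ?thesis by (metis add_right_cancel)
qed

definition Lt :: "'a::field \<Rightarrow> 'a vec3 set" where "Lt t = sp2 (t,1,0) (t*t,0,1)"
definition Lz :: "'a::field vec3 set" where "Lz = sp2 (1,0,0) (0,1,0)"
definition Ly :: "'a::field vec3 set" where "Ly = sp2 (1,0,0) (0,0,1)"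
definition HS :: "'a::field vec3 set set" where "HS = range Lt \<union> {Lz, Ly}"

lemma mem_Lt: "(x,y,z) \<in> Lt t \<longleftrightarrow> x = y*t + z*(t*t)"
  unfolding Lt_def sp2_mem3 by auto
lemma mem_Lz: "(x,y,z) \<in> (Lz::'a::field vec3 set) \<longleftrightarrow> z = 0"
  unfolding Lz_def sp2_mem3 by auto
lemma mem_Ly: "(x,y,z) \<in> (Ly::'a::field vec3 set) \<longleftrightarrow> y = 0"
  unfolding Ly_def sp2_mem3 by auto

lemma HS_lines: "HS \<subseteq> pg_lines"
proof -
  have "Lt t \<in> pg_lines" for t :: 'a
    unfolding Lt_def lines_def by (rule CollectI, intro exI conjI, rule refl) (simp add: li3)
  moreover have "(Lz :: 'a vec3 set) \<in> pg_lines"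
    unfolding Lz_def lines_def by (rule CollectI, intro exI conjI, rule refl) (simp add: li3)
  moreover have "(Ly :: 'a vec3 set) \<in> pg_lines"
    unfolding Ly_def lines_def by (rule CollectI, intro exI conjI, rule refl) (simp add: li3)
  ultimately show ?thesis unfolding HS_def by auto
qed

lemma Lt_inj: assumes c2: "(1::'a::field) + 1 = 0" shows "inj (Lt :: 'a \<Rightarrow> _)"
proof
  fix s t :: 'a assume "Lt s = Lt t"
  moreover have "(s*s, 0, 1) \<in> Lt s" by (simp add: mem_Lt)
  ultimately have "(s*s, 0, 1) \<in> Lt t" by simp
  then have "s*s = t*t" by (simp add: mem_Lt)
  then show "s = t" using sq_inj c2 by blast
qed

lemma Lt_Lz: "Lt t \<noteq> Lz"
proof
  assume "Lt t = Lz"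
  moreover have "(t*t, 0, 1) \<in> Lt t" by (simp add: mem_Lt)
  ultimately show False by (simp add: mem_Lz)
qed
lemma Lt_Ly: "Lt t \<noteq> Ly"
proof
  assume "Lt t = Ly"
  moreover have "(t, 1, 0) \<in> Lt t" by (simp add: mem_Lt)
  ultimately show False by (simp add: mem_Ly)
qed
lemma Lz_Ly: "(Lz :: 'a::field vec3 set) \<noteq> Ly"
proof
  assume "(Lz :: 'a::field vec3 set) = Ly"
  moreover have "((0::'a), (1::'a), (0::'a)) \<in> Lz" by (simp add: mem_Lz)
  ultimately show False by (simp add: mem_Ly)
qed

lemma HS_char: "{L \<in> HS. (x,y,z) \<in> L} =
   Lt ` {t. x = y*t + z*(t*t)} \<union> (if z = 0 then {Lz} else {}) \<union> (if y = 0 then {Ly} else {})"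
  unfolding HS_def by (auto simp: mem_Lt mem_Lz mem_Ly)

lemma HS_even:
  assumes fin: "finite (UNIV :: 'a::field set)" and c2: "(1::'a) + 1 = 0"
    and nz: "(x,y,z) \<noteq> ((0::'a),(0::'a),(0::'a))"
  shows "even (card {L \<in> HS. (x,y,z) \<in> L})"
proof -
  have inj: "inj (Lt :: 'a \<Rightarrow> _)" using Lt_inj c2 by blast
  show ?thesis
  proof (cases "y = 0")
    case y0: True
    show ?thesis
    proof (cases "z = 0")
      case z0: True
      then have "x \<noteq> 0" using y0 nz by simp
      then have "{L \<in> HS. (x,y,z) \<in> L} = {Lz, Ly}" unfolding HS_char using y0 z0 by auto
      moreover have "card {Lz::'a vec3 set, Ly} = 2" using Lz_Ly[where 'a='a] by (simp only: card_2_iff) blast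
      ultimately show ?thesis by simp
    next
      case z0: False
      have "inj (\<lambda>t::'a. t*t)" by (rule injI) (rule sq_inj[OF c2])
      then have "surj (\<lambda>t::'a. t*t)" using fin finite_UNIV_inj_surj by blast
      then obtain r where r: "r*r = x/z" by (metis surjD)
      have "{t. x = y*t + z*(t*t)} = {r}"
      proof (intro set_eqI iffI)
        fix t assume "t \<in> {t. x = y*t + z*(t*t)}"
        then have "t*t = x/z" using y0 z0 by (simp add: field_simps)
        then show "t \<in> {r}" using sq_inj[OF c2, of t r] r by simp
      next
        fix t assume "t \<in> {r}"
        then show "t \<in> {t. x = y*t + z*(t*t)}" using r y0 z0 by (simp add: field_simps)
      qed
      then have "{L \<in> HS. (x,y,z) \<in> L} = {Lt r, Ly}" unfolding HS_char using y0 z0 by auto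
      moreover have "card {Lt r, Ly} = 2" using Lt_Ly[of r] by simp
      ultimately show ?thesis by simp
    qed
  next
    case y0: False
    show ?thesis
    proof (cases "z = 0")
      case z0: True
      have "{t. x = y*t + z*(t*t)} = {x/y}" using y0 z0 by (auto simp: field_simps)
      then have "{L \<in> HS. (x,y,z) \<in> L} = {Lt (x/y), Lz}" unfolding HS_char using y0 z0 by auto
      moreover have "card {Lt (x/y), Lz} = 2" using Lt_Lz[of "x/y"] by simp
      ultimately show ?thesis by simp
    next
      case z0: False
      show ?thesis
      proof (cases "\<exists>t. x = y*t + z*(t*t)")
        case False
        then have h: "{L \<in> HS. (x,y,z) \<in> L} = {}" unfolding HS_char using y0 z0 by auto
        show ?thesis unfolding h by simp
      next
        case True
        then obtain t1 where t1: "x = y*t1 + z*(t1*t1)" by blast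
        define t2 where "t2 = -(y/z) - t1"
        have roots: "{t. x = y*t + z*(t*t)} = {t1, t2}"
        proof (intro set_eqI iffI)
          fix t assume "t \<in> {t. x = y*t + z*(t*t)}"
          then have "y*t + z*(t*t) = y*t1 + z*(t1*t1)" using t1 by simp
          moreover have "y*t + z*(t*t) - (y*t1 + z*(t1*t1)) = (t - t1)*(y + z*(t+t1))"
            by (simp add: algebra_simps)
          ultimately have "(t - t1)*(y + z*(t+t1)) = 0" by simp
          then have "t = t1 \<or> y + z*(t+t1) = 0" by simp
          moreover have "y + z*(t+t1) = 0 \<Longrightarrow> t = t2"
            unfolding t2_def using z0 by (simp add: field_simps add_eq_0_iff)
          ultimately show "t \<in> {t1, t2}" by auto
        next
          fix t assume "t \<in> {t1, t2}"
          then have "t = t1 \<or> t = t2" by simp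
          moreover have "y*t2 + z*(t2*t2) = y*t1 + z*(t1*t1)"
          proof -
            have "y*t2 + z*(t2*t2) - (y*t1 + z*(t1*t1)) = (t2 - t1)*(y + z*(t2+t1))"
              by (simp add: algebra_simps)
            moreover have "y + z*(t2+t1) = 0" unfolding t2_def using z0 by (simp add: field_simps)
            ultimately show ?thesis by simp
          qed
          ultimately show "t \<in> {t. x = y*t + z*(t*t)}" using t1 by auto
        qed
        have "t1 \<noteq> t2"
        proof
          assume "t1 = t2"
          then have "t1 + t1 = -(y/z)" unfolding t2_def by (simp add: algebra_simps)
          moreover have "t1 + t1 = 0" using c2 by (metis distrib_left mult_1_right mult_zero_right)
          ultimately show False using y0 z0 by simp
        qed
        have "{L \<in> HS. (x,y,z) \<in> L} = {Lt t1, Lt t2}" unfolding HS_char roots using y0 z0 by auto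
        moreover have "Lt t1 \<noteq> Lt t2" using inj \<open>t1 \<noteq> t2\<close> by (meson injD)
        ultimately have "card {L \<in> HS. (x,y,z) \<in> L} = 2" by simp
        then show ?thesis by simp
      qed
    qed
  qed
qed

lemma invol_even:
  assumes "finite A" "\<forall>x\<in>A. f x \<in> A \<and> f (f x) = x \<and> f x \<noteq> x"
  shows "even (card A)"
  using assms
proof (induction "card A" arbitrary: A rule: less_induct)
  case less
  show ?case
  proof (cases "A = {}")
    case True then show ?thesis by simp
  next
    case False
    then obtain a where a: "a \<in> A" by blast
    define A' where "A' = A - {a, f a}"
    have fa: "f a \<in> A" "f a \<noteq> a" using a less.prems by auto
    have cA: "card A = card A' + 2"
    proof -
      have "card A' = card A - card {a, f a}" unfolding A'_def
        using a fa less.prems(1) by (subst card_Diff_subset) auto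
      moreover have "card {a, f a} = 2" using fa by simp
      moreover have "card A \<ge> card {a, f a}" using a fa less.prems(1) by (intro card_mono) auto
      ultimately show ?thesis by simp
    qed
    have "even (card A')"
    proof (rule less.hyps)
      show "card A' < card A" using cA by simp
      show "finite A'" using less.prems(1) A'_def by simp
      show "\<forall>x\<in>A'. f x \<in> A' \<and> f (f x) = x \<and> f x \<noteq> x"
      proof
        fix x assume x: "x \<in> A'"
        have "f x \<in> A" "f (f x) = x" "f x \<noteq> x" using x less.prems(2) unfolding A'_def by auto
        moreover have "f x \<noteq> a" using x \<open>f (f x) = x\<close> unfolding A'_def by auto
        moreover have "f x \<noteq> f a"
        proof
          assume "f x = f a"
          then have "f (f x) = f (f a)" by simp
          then show False using x a less.prems(2) unfolding A'_def by auto
        qed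
        ultimately show "f x \<in> A' \<and> f (f x) = x \<and> f x \<noteq> x" unfolding A'_def by auto
      qed
    qed
    then show ?thesis using cA by simp
  qed
qed

lemma char2:
  assumes "finite (UNIV :: 'a::field set)" "even (card (UNIV :: 'a set))"
  shows "(1::'a) + 1 = 0"
proof (rule ccontr)
  assume h: "(1::'a) + 1 \<noteq> 0"
  have ev: "even (card {x::'a. x \<noteq> 0})"
  proof (rule invol_even[where f = uminus])
    show "finite {x::'a. x \<noteq> 0}" using assms(1) by (simp add: finite_subset)
    show "\<forall>x\<in>{x::'a. x \<noteq> 0}. - x \<in> {x. x \<noteq> 0} \<and> - (- x) = x \<and> - x \<noteq> x"
    proof (intro ballI conjI)
      fix x :: 'a assume "x \<in> {x. x \<noteq> 0}"
      then have x: "x \<noteq> 0" by simp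
      show "- x \<in> {x. x \<noteq> 0}" using x by simp
      show "- (- x) = x" by simp
      show "- x \<noteq> x"
      proof
        assume "- x = x"
        then have "(1 + 1) * x = 0" by (simp add: algebra_simps)
        then show False using h x by simp
      qed
    qed
  qed
  have "UNIV = insert (0::'a) {x. x \<noteq> 0}" by auto
  then have "card (UNIV::'a set) = card (insert (0::'a) {x. x \<noteq> 0})" by simp
  also have "\<dots> = Suc (card {x::'a. x \<noteq> 0})"
    using assms(1) by (intro card_insert_disjoint) (auto simp: finite_subset)
  finally show False using assms(2) ev by simp
qed


lemma pt_line: "L \<in> pg_lines \<Longrightarrow> sp1 v \<subseteq> L \<longleftrightarrow> v \<in> L"
  unfolding lines_def using pt_sub by blast

lemma symdiff_card:
  assumes "finite A" "finite B"
  shows "card ((A - B) \<union> (B - A)) + 2 * card (A \<inter> B) = card A + card B"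
proof -
  have "card ((A - B) \<union> (B - A)) = card (A - B) + card (B - A)"
    using assms by (intro card_Un_disjoint) auto
  moreover have "card (A - B) + card (A \<inter> B) = card A"
    using assms by (metis Diff_Diff_Int card_Diff_subset_Int finite_Int inf_le1 le_add_diff_inverse2 card_mono
         Int_commute inf.commute)
  moreover have "card (B - A) + card (A \<inter> B) = card B"
    using assms by (metis Diff_Diff_Int card_Diff_subset_Int finite_Int inf_le1 le_add_diff_inverse2 card_mono
         Int_commute inf.commute)
  ultimately show ?thesis by simp
qed

lemma HS_code:
  assumes fin: "finite (UNIV :: 'a::field set)" and c2: "(1::'a) + 1 = 0"
  shows "(\<lambda>L. L \<in> (HS :: 'a vec3 set set)) \<in> bin_kernel pg_points pg_lines pg_inc"
  unfolding bin_kernel_def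
proof (intro CollectI conjI ballI)
  show "(\<lambda>L. L \<in> (HS :: 'a vec3 set set)) \<in> words pg_lines" unfolding words_def using HS_lines by auto
  fix P :: "'a vec3 set" assume "P \<in> pg_points"
  then obtain v where P: "P = sp1 v" "v \<noteq> (0,0,0)" unfolding pts_def by auto
  obtain x y z where v: "v = (x,y,z)" by (cases v) auto
  have "{j \<in> pg_lines. P \<subseteq> j \<and> j \<in> HS} = {L \<in> HS. (x,y,z) \<in> L}"
    using HS_lines pt_line unfolding P(1) v by blast
  then show "\<not> syndrome pg_points pg_lines pg_inc (\<lambda>L. L \<in> HS) P"
    unfolding syndrome_def using HS_even[OF fin c2, of x y z] P(2) v by simp
qed

lemma HS_card: assumes fin: "finite (UNIV :: 'a::field set)"
  shows "card (HS :: 'a vec3 set set) \<le> card (UNIV :: 'a set) + 2"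
proof -
  have "card (HS :: 'a vec3 set set) \<le> card (range (Lt :: 'a \<Rightarrow> _)) + card {Lz :: 'a vec3 set, Ly}"
    unfolding HS_def by (rule card_Un_le)
  moreover have "card (range (Lt :: 'a \<Rightarrow> _)) \<le> card (UNIV :: 'a set)" by (rule card_image_le[OF fin])
  moreover have "card {Lz :: 'a vec3 set, Ly} \<le> 2" by (simp add: card_insert_le_m1)
  ultimately show ?thesis by simp
qed

lemma d_bound:
  assumes fin: "finite (UNIV :: 'a::field set)" and c2: "(1::'a) + 1 = 0"
  shows "min_dist (bin_kernel (pg_points :: 'a vec3 set set) pg_lines pg_inc) \<le> card (UNIV :: 'a set) + 2"
proof -
  let ?c = "\<lambda>L. L \<in> (HS :: 'a vec3 set set)"
  have h1: "?c \<noteq> (\<lambda>_. False)" unfolding HS_def by (metis UnI2 insertI1)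
  have h2: "wt ?c = card (HS :: 'a vec3 set set)" unfolding wt_def by simp
  have "card (HS :: 'a vec3 set set) \<in> {wt c | c. c \<in> bin_kernel (pg_points :: 'a vec3 set set) pg_lines pg_inc \<and> c \<noteq> (\<lambda>_. False)}"
    unfolding h2[symmetric] using HS_code[OF fin c2] h1 by (intro CollectI exI[of _ ?c]) simp
  then have "min_dist (bin_kernel (pg_points :: 'a vec3 set set) pg_lines pg_inc) \<le> card (HS :: 'a vec3 set set)"
    unfolding min_dist_def Inf_nat_def by (rule Least_le)
  then show ?thesis using HS_card[OF fin] by simp
qed

lemma at_most_one:
  assumes "j \<in> pg_lines" "L \<in> pg_lines" "j \<noteq> L" "finite (UNIV :: 'a::field set)"
  shows "card {P \<in> (pg_points :: 'a vec3 set set). P \<subseteq> j \<and> P \<subseteq> L} \<le> 1"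
proof -
  have "finite {P \<in> (pg_points :: 'a vec3 set set). P \<subseteq> j \<and> P \<subseteq> L}" using fin_pts[OF assms(4)] by simp
  moreover have "\<forall>a\<in>{P \<in> (pg_points :: 'a vec3 set set). P \<subseteq> j \<and> P \<subseteq> L}. \<forall>b\<in>{P \<in> pg_points. P \<subseteq> j \<and> P \<subseteq> L}. a = b"
  proof (intro ballI)
    fix a b assume a: "a \<in> {P \<in> (pg_points :: 'a vec3 set set). P \<subseteq> j \<and> P \<subseteq> L}"
      and b: "b \<in> {P \<in> (pg_points :: 'a vec3 set set). P \<subseteq> j \<and> P \<subseteq> L}"
    show "a = b"
    proof (rule ccontr)
      assume "a \<noteq> b"
      then have "j = L" using two_pts[OF assms(1,2), of a b] a b by simp
      then show False using assms(3) by simp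
    qed
  qed
  ultimately show ?thesis by (simp add: card_le_Suc0_iff_eq)
qed


theorem theorem3p5:
  fixes c e :: "'a::field vec3 set \<Rightarrow> bool"
  assumes "finite (UNIV :: 'a set)"
    and "even (card (UNIV :: 'a set))"
    and "c \<in> bin_kernel (pg_points :: 'a vec3 set set) pg_lines pg_inc"
    and "e \<in> words (pg_lines :: 'a vec3 set set)"
    and "wt e \<le> (min_dist (bin_kernel (pg_points :: 'a vec3 set set) pg_lines pg_inc) - 1) div 2"
  shows "bitflip_round (pg_points :: 'a vec3 set set) pg_lines pg_inc (xorw c e) = c"
proof -
  note fin = assms(1)
  have c2: "(1::'a) + 1 = 0" using char2 assms(1,2) by blast
  define q where "q = card (UNIV :: 'a set)"
  define E where "E = {L. e L}"
  have Esub: "E \<subseteq> pg_lines" using assms(4) unfolding words_def E_def by auto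
  have finL: "finite (pg_lines :: 'a vec3 set set)" using fin_lines[OF fin] .
  have finP: "finite (pg_points :: 'a vec3 set set)" using fin_pts[OF fin] .
  have finE: "finite E" using Esub finL finite_subset by blast
  have tE: "wt e = card E" unfolding wt_def E_def ..
  have dq: "min_dist (bin_kernel (pg_points :: 'a vec3 set set) pg_lines pg_inc) \<le> q + 2"
    using d_bound[OF fin c2] unfolding q_def .
  have t2: "2 * card E \<le> q + 1"
  proof -
    have "2 * card E \<le> 2 * ((min_dist (bin_kernel (pg_points :: 'a vec3 set set) pg_lines pg_inc) - 1) div 2)"
      using assms(5) tE by simp
    also have "\<dots> \<le> min_dist (bin_kernel (pg_points :: 'a vec3 set set) pg_lines pg_inc) - 1" by simp
    finally show ?thesis using dq by linarith
  qed
  have cker: "even (card {j \<in> pg_lines. P \<subseteq> j \<and> c j})" if "P \<in> pg_points" for P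
    using assms(3) that unfolding bin_kernel_def syndrome_def by auto
  have cw: "\<not> c j" if "j \<notin> pg_lines" for j
    using assms(3) that unfolding bin_kernel_def words_def by auto
  have ew: "\<not> e j" if "j \<notin> pg_lines" for j
    using assms(4) that unfolding words_def by auto
  have syn: "syndrome pg_points pg_lines pg_inc (xorw c e) P \<longleftrightarrow> odd (card {L \<in> E. P \<subseteq> L})"
    if P: "P \<in> pg_points" for P
  proof -
    define A where "A = {j \<in> pg_lines. P \<subseteq> j \<and> c j}"
    define B where "B = {j \<in> pg_lines. P \<subseteq> j \<and> e j}"
    have fA: "finite A" unfolding A_def using finL by simp
    have fB: "finite B" unfolding B_def using finL by simp
    have Y: "{j \<in> pg_lines. P \<subseteq> j \<and> xorw c e j} = (A - B) \<union> (B - A)"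
      unfolding A_def B_def xorw_def by auto
    have BE: "B = {L \<in> E. P \<subseteq> L}" unfolding B_def E_def using Esub E_def by auto
    have "even (card A)" unfolding A_def using cker[OF P] .
    moreover have "card ((A - B) \<union> (B - A)) + 2 * card (A \<inter> B) = card A + card B"
      using symdiff_card[OF fA fB] .
    ultimately have "odd (card ((A - B) \<union> (B - A))) \<longleftrightarrow> odd (card B)"
      by (metis even_add even_mult_iff even_numeral)
    then show ?thesis unfolding syndrome_def Y BE .
  qed
  show ?thesis
  proof (rule ext)
    fix j :: "'a vec3 set"
    show "bitflip_round pg_points pg_lines pg_inc (xorw c e) j = c j"
    proof (cases "j \<in> pg_lines")
      case False
      then show ?thesis unfolding bitflip_round_def xorw_def using cw ew by simp
    next
      case jL: True
      define U where "U = {P \<in> (pg_points :: 'a vec3 set set). P \<subseteq> j \<and> odd (card {L \<in> E. P \<subseteq> L})}"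
      define Pj where "Pj = {P \<in> (pg_points :: 'a vec3 set set). P \<subseteq> j}"
      have uc: "unsat_count pg_points pg_lines pg_inc (xorw c e) j = card U"
        unfolding unsat_count_def U_def using syn by (metis (no_types, lifting))
      have cwj: "col_weight pg_points pg_inc j = card Pj" unfolding col_weight_def Pj_def ..
      have n: "q + 1 \<le> card Pj" unfolding Pj_def q_def using line_pts[OF fin jL] .
      have fU: "finite U" unfolding U_def using finP by simp
      have fPj: "finite Pj" unfolding Pj_def using finP by simp
      show ?thesis
      proof (cases "e j")
        case ej: True
        define Bad where "Bad = (\<Union>L\<in>E-{j}. {P \<in> (pg_points :: 'a vec3 set set). P \<subseteq> j \<and> P \<subseteq> L})"
        have "card Bad \<le> (\<Sum>L\<in>E-{j}. card {P \<in> (pg_points :: 'a vec3 set set). P \<subseteq> j \<and> P \<subseteq> L})"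
          unfolding Bad_def using finE by (intro card_UN_le) simp
        also have "\<dots> \<le> (\<Sum>L\<in>E-{j}. 1)"
        proof (rule sum_mono)
          fix L assume L: "L \<in> E - {j}"
          then show "card {P \<in> (pg_points :: 'a vec3 set set). P \<subseteq> j \<and> P \<subseteq> L} \<le> 1"
            using at_most_one[OF jL _ _ fin, of L] Esub by auto
        qed
        also have "\<dots> = card E - 1" using ej E_def finE by simp
        finally have cB: "card Bad \<le> card E - 1" .
        have fBad: "finite Bad" unfolding Bad_def using finP finE by auto
        have "Pj - Bad \<subseteq> U"
        proof
          fix P assume P: "P \<in> Pj - Bad"
          have "{L \<in> E. P \<subseteq> L} = {j}"
          proof (intro set_eqI iffI)
            fix L assume L: "L \<in> {L \<in> E. P \<subseteq> L}"
            show "L \<in> {j}"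
            proof (rule ccontr)
              assume "L \<notin> {j}"
              then have "P \<in> Bad" unfolding Bad_def using L P Pj_def by auto
              then show False using P by simp
            qed
          next
            fix L assume "L \<in> {j}"
            then show "L \<in> {L \<in> E. P \<subseteq> L}" using P ej E_def Pj_def by auto
          qed
          then show "P \<in> U" unfolding U_def using P Pj_def by auto
        qed
        then have "card (Pj - Bad) \<le> card U" using fU by (rule card_mono[rotated])
        moreover have "card Pj - card Bad \<le> card (Pj - Bad)" using fBad by (rule diff_card_le_card_Diff)
        moreover have "card E \<ge> 1" using ej E_def finE by (metis One_nat_def Suc_leI card_gt_0_iff empty_iff mem_Collect_eq)
        ultimately have "2 * card U > card Pj" using cB t2 n by linarith
        then show ?thesis unfolding bitflip_round_def uc cwj using jL ej by (simp add: xorw_def)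
      next
        case ej: False
        have "U \<subseteq> (\<Union>L\<in>E. {P \<in> (pg_points :: 'a vec3 set set). P \<subseteq> j \<and> P \<subseteq> L})"
        proof
          fix P assume P: "P \<in> U"
          then have "card {L \<in> E. P \<subseteq> L} \<noteq> 0" unfolding U_def by (metis (mono_tags, lifting) mem_Collect_eq odd_pos neq0_conv)
          then have "{L \<in> E. P \<subseteq> L} \<noteq> {}" by (metis card.empty)
          then obtain L where "L \<in> E" "P \<subseteq> L" by blast
          then show "P \<in> (\<Union>L\<in>E. {P \<in> (pg_points :: 'a vec3 set set). P \<subseteq> j \<and> P \<subseteq> L})"
            using P unfolding U_def by blast
        qed
        then have "card U \<le> card (\<Union>L\<in>E. {P \<in> (pg_points :: 'a vec3 set set). P \<subseteq> j \<and> P \<subseteq> L})"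
          using finP finE by (intro card_mono) auto
        also have "\<dots> \<le> (\<Sum>L\<in>E. card {P \<in> (pg_points :: 'a vec3 set set). P \<subseteq> j \<and> P \<subseteq> L})"
          using finE by (intro card_UN_le) simp
        also have "\<dots> \<le> (\<Sum>L\<in>E. 1)"
        proof (rule sum_mono)
          fix L assume L: "L \<in> E"
          then have "L \<noteq> j" using ej E_def by auto
          then show "card {P \<in> (pg_points :: 'a vec3 set set). P \<subseteq> j \<and> P \<subseteq> L} \<le> 1"
            using at_most_one[OF jL _ _ fin, of L] Esub L by auto
        qed
        also have "\<dots> = card E" by simp
        finally have "\<not> 2 * card U > card Pj" using t2 n by linarith
        then show ?thesis unfolding bitflip_round_def uc cwj using ej by (simp add: xorw_def)
      qed
    qed
  qed
qed

end
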